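(* Let $R$ be an arithmetic ring with Jacobson radical $J(R)$. Then the following are equivalent: (1) $R$ has a unique minimal prime ideal; (2) for every $d\in R\setminus J(R)$, the annihilator $(0:d)$ is contained in $J(R)$.
   Context: All rings are commutative with identity. $R$ is arithmetic if $R_M$ is a valuation ring (ideals totally ordered by inclusion) for every maximal ideal $M$. *)

theory Defs
  imports "HOL-Algebra.Algebra"
begin

definition loc_rel :: "('a, 'b) ring_scheme \<Rightarrow> 'a set \<Rightarrow> (('a \<times> 'a) \<times> ('a \<times> 'a)) set" where
  "loc_rel R M = {((a, s), (b, t)). a \<in> carrier R \<and> b \<in> carrier R \<and>
      s \<in> carrier R - M \<and> t \<in> carrier R - M \<and>
      (\<exists>u \<in> carrier R - M. u \<otimes>\<^bsub>R\<^esub> ((a \<otimes>\<^bsub>R\<^esub> t) \<ominus>\<^bsub>R\<^esub> (b \<otimes>\<^bsub>R\<^esub> s)) = \<zero>\<^bsub>R\<^esub>)}"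

definition loc_class :: "('a, 'b) ring_scheme \<Rightarrow> 'a set \<Rightarrow> 'a \<times> 'a \<Rightarrow> ('a \<times> 'a) set" where
  "loc_class R M p = loc_rel R M `` {p}"

definition loc_rep :: "('a \<times> 'a) set \<Rightarrow> 'a \<times> 'a" where
  "loc_rep A = (SOME p. p \<in> A)"

definition localization :: "('a, 'b) ring_scheme \<Rightarrow> 'a set \<Rightarrow> (('a \<times> 'a) set) ring" where
  "localization R M =
     \<lparr> carrier = (carrier R \<times> (carrier R - M)) // loc_rel R M,
       monoid.mult = (\<lambda>A B. loc_class R M
          (fst (loc_rep A) \<otimes>\<^bsub>R\<^esub> fst (loc_rep B), snd (loc_rep A) \<otimes>\<^bsub>R\<^esub> snd (loc_rep B))),
       one = loc_class R M (\<one>\<^bsub>R\<^esub>, \<one>\<^bsub>R\<^esub>),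
       ring.zero = loc_class R M (\<zero>\<^bsub>R\<^esub>, \<one>\<^bsub>R\<^esub>),
       add = (\<lambda>A B. loc_class R M
          ((fst (loc_rep A) \<otimes>\<^bsub>R\<^esub> snd (loc_rep B)) \<oplus>\<^bsub>R\<^esub> (fst (loc_rep B) \<otimes>\<^bsub>R\<^esub> snd (loc_rep A)),
           snd (loc_rep A) \<otimes>\<^bsub>R\<^esub> snd (loc_rep B))) \<rparr>"

definition valuation_ring :: "('c, 'd) ring_scheme \<Rightarrow> bool" where
  "valuation_ring S \<longleftrightarrow> cring S \<and>
     (\<forall>I J. ideal I S \<and> ideal J S \<longrightarrow> I \<subseteq> J \<or> J \<subseteq> I)"

definition arithmetic_ring :: "('a, 'b) ring_scheme \<Rightarrow> bool" where
  "arithmetic_ring R \<longleftrightarrow> cring R \<and>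
     (\<forall>M. maximalideal M R \<longrightarrow> valuation_ring (localization R M))"

definition jacobson_radical :: "('a, 'b) ring_scheme \<Rightarrow> 'a set" where
  "jacobson_radical R = {x \<in> carrier R. \<forall>M. maximalideal M R \<longrightarrow> x \<in> M}"

definition annihilator :: "('a, 'b) ring_scheme \<Rightarrow> 'a \<Rightarrow> 'a set" where
  "annihilator R d = {x \<in> carrier R. x \<otimes>\<^bsub>R\<^esub> d = \<zero>\<^bsub>R\<^esub>}"

definition minimal_prime :: "('a, 'b) ring_scheme \<Rightarrow> 'a set \<Rightarrow> bool" where
  "minimal_prime R P \<longleftrightarrow> primeideal P R \<and>
     (\<forall>Q. primeideal Q R \<and> Q \<subseteq> P \<longrightarrow> Q = P)"

end

theory Submission
  imports Defs
begin


lemma loc_step: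
  assumes cR: "cring R" and pM: "primeideal M R"
    and a: "a \<in> carrier R" and b: "b \<in> carrier R"
    and C: "C \<in> carrier (localization R M)"
    and eq: "loc_class R M (a, \<one>\<^bsub>R\<^esub>) = C \<otimes>\<^bsub>localization R M\<^esub> loc_class R M (b, \<one>\<^bsub>R\<^esub>)"
  shows "\<exists>t\<in>carrier R - M. \<exists>c\<in>carrier R. t \<otimes>\<^bsub>R\<^esub> a = c \<otimes>\<^bsub>R\<^esub> b"
proof -
  interpret R: cring R by (rule cR)
  interpret M: primeideal M R by (rule pM)
  have one: "\<one>\<^bsub>R\<^esub> \<in> carrier R - M" using M.one_imp_carrier M.I_notcarr by auto
  have refl: "((x, s), (x, s)) \<in> loc_rel R M" if "x \<in> carrier R" "s \<in> carrier R - M" for x s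
    using that one unfolding loc_rel_def by (auto intro!: bexI[where x="\<one>\<^bsub>R\<^esub>"])
  have prod: "x \<otimes>\<^bsub>R\<^esub> y \<in> carrier R - M" if "x \<in> carrier R - M" "y \<in> carrier R - M" for x y
    using that M.I_prime by auto
  from C obtain p where p: "p \<in> carrier R \<times> (carrier R - M)" and Cp: "C = loc_rel R M `` {p}"
    by (auto simp: localization_def elim!: quotientE)
  have "p \<in> C" using p Cp refl by auto
  hence "loc_rep C \<in> C" unfolding loc_rep_def by (rule someI)
  then obtain c s where cs: "loc_rep C = (c, s)" "c \<in> carrier R" "s \<in> carrier R - M"
    using Cp unfolding loc_rel_def by auto
  let ?Y = "loc_class R M (b, \<one>\<^bsub>R\<^esub>)"
  have "(b, \<one>\<^bsub>R\<^esub>) \<in> ?Y" using refl[OF b one] unfolding loc_class_def by auto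
  hence "loc_rep ?Y \<in> ?Y" unfolding loc_rep_def by (rule someI)
  then obtain b' t' u where bt: "loc_rep ?Y = (b', t')" "b' \<in> carrier R" "t' \<in> carrier R - M"
     "u \<in> carrier R - M" "u \<otimes>\<^bsub>R\<^esub> ((b \<otimes>\<^bsub>R\<^esub> t') \<ominus>\<^bsub>R\<^esub> (b' \<otimes>\<^bsub>R\<^esub> \<one>\<^bsub>R\<^esub>)) = \<zero>\<^bsub>R\<^esub>"
    unfolding loc_class_def loc_rel_def by auto
  have "C \<otimes>\<^bsub>localization R M\<^esub> ?Y = loc_class R M (c \<otimes>\<^bsub>R\<^esub> b', s \<otimes>\<^bsub>R\<^esub> t')"
    using cs bt by (simp add: localization_def)
  moreover have "(a, \<one>\<^bsub>R\<^esub>) \<in> loc_class R M (a, \<one>\<^bsub>R\<^esub>)"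
    using refl[OF a one] unfolding loc_class_def by auto
  ultimately have "(a, \<one>\<^bsub>R\<^esub>) \<in> loc_class R M (c \<otimes>\<^bsub>R\<^esub> b', s \<otimes>\<^bsub>R\<^esub> t')" using eq by simp
  then obtain v where v: "v \<in> carrier R - M"
    "v \<otimes>\<^bsub>R\<^esub> (((c \<otimes>\<^bsub>R\<^esub> b') \<otimes>\<^bsub>R\<^esub> \<one>\<^bsub>R\<^esub>) \<ominus>\<^bsub>R\<^esub> (a \<otimes>\<^bsub>R\<^esub> (s \<otimes>\<^bsub>R\<^esub> t'))) = \<zero>\<^bsub>R\<^esub>"
    unfolding loc_class_def loc_rel_def by auto
  have e1: "u \<otimes>\<^bsub>R\<^esub> b \<otimes>\<^bsub>R\<^esub> t' = u \<otimes>\<^bsub>R\<^esub> b'"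
  proof -
    have "u \<otimes>\<^bsub>R\<^esub> ((b \<otimes>\<^bsub>R\<^esub> t') \<ominus>\<^bsub>R\<^esub> (b' \<otimes>\<^bsub>R\<^esub> \<one>\<^bsub>R\<^esub>)) = u \<otimes>\<^bsub>R\<^esub> b \<otimes>\<^bsub>R\<^esub> t' \<ominus>\<^bsub>R\<^esub> u \<otimes>\<^bsub>R\<^esub> b'"
      using bt(2) b DiffD1[OF bt(3)] DiffD1[OF bt(4)] by algebra
    thus ?thesis using bt b by simp
  qed
  have e2: "v \<otimes>\<^bsub>R\<^esub> c \<otimes>\<^bsub>R\<^esub> b' = v \<otimes>\<^bsub>R\<^esub> a \<otimes>\<^bsub>R\<^esub> s \<otimes>\<^bsub>R\<^esub> t'"
  proof -
    have "v \<otimes>\<^bsub>R\<^esub> (((c \<otimes>\<^bsub>R\<^esub> b') \<otimes>\<^bsub>R\<^esub> \<one>\<^bsub>R\<^esub>) \<ominus>\<^bsub>R\<^esub> (a \<otimes>\<^bsub>R\<^esub> (s \<otimes>\<^bsub>R\<^esub> t'))) = v \<otimes>\<^bsub>R\<^esub> c \<otimes>\<^bsub>R\<^esub> b' \<ominus>\<^bsub>R\<^esub> v \<otimes>\<^bsub>R\<^esub> a \<otimes>\<^bsub>R\<^esub> s \<otimes>\<^bsub>R\<^esub> t'"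
      using bt(2) cs(2) a DiffD1[OF bt(3)] DiffD1[OF cs(3)] DiffD1[OF v(1)] by algebra
    thus ?thesis using bt cs v a by simp
  qed
  have "(u \<otimes>\<^bsub>R\<^esub> v \<otimes>\<^bsub>R\<^esub> s \<otimes>\<^bsub>R\<^esub> t') \<otimes>\<^bsub>R\<^esub> a = u \<otimes>\<^bsub>R\<^esub> (v \<otimes>\<^bsub>R\<^esub> a \<otimes>\<^bsub>R\<^esub> s \<otimes>\<^bsub>R\<^esub> t')"
    using bt cs v a by (simp add: R.m_ac)
  also have "\<dots> = u \<otimes>\<^bsub>R\<^esub> (v \<otimes>\<^bsub>R\<^esub> c \<otimes>\<^bsub>R\<^esub> b')" using e2 by simp
  also have "\<dots> = v \<otimes>\<^bsub>R\<^esub> c \<otimes>\<^bsub>R\<^esub> (u \<otimes>\<^bsub>R\<^esub> b')" using bt cs v a by (simp add: R.m_ac)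
  also have "\<dots> = v \<otimes>\<^bsub>R\<^esub> c \<otimes>\<^bsub>R\<^esub> (u \<otimes>\<^bsub>R\<^esub> b \<otimes>\<^bsub>R\<^esub> t')" using e1 by simp
  also have "\<dots> = (v \<otimes>\<^bsub>R\<^esub> c \<otimes>\<^bsub>R\<^esub> u \<otimes>\<^bsub>R\<^esub> t') \<otimes>\<^bsub>R\<^esub> b" using bt cs v b by (simp add: R.m_ac)
  finally have E: "(u \<otimes>\<^bsub>R\<^esub> v \<otimes>\<^bsub>R\<^esub> s \<otimes>\<^bsub>R\<^esub> t') \<otimes>\<^bsub>R\<^esub> a = (v \<otimes>\<^bsub>R\<^esub> c \<otimes>\<^bsub>R\<^esub> u \<otimes>\<^bsub>R\<^esub> t') \<otimes>\<^bsub>R\<^esub> b" .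
  moreover have "v \<otimes>\<^bsub>R\<^esub> c \<otimes>\<^bsub>R\<^esub> u \<otimes>\<^bsub>R\<^esub> t' \<in> carrier R" using bt cs v by simp
  ultimately show ?thesis
    using prod[OF prod[OF prod[OF bt(4) v(1)] cs(3)] bt(3)] by blast
qed

lemma loc_prop:
  assumes cR: "cring R" and mM: "maximalideal M R" and vr: "valuation_ring (localization R M)"
    and a: "a \<in> carrier R" and b: "b \<in> carrier R"
  shows "\<exists>t\<in>carrier R - M. \<exists>c\<in>carrier R. t \<otimes>\<^bsub>R\<^esub> a = c \<otimes>\<^bsub>R\<^esub> b \<or> t \<otimes>\<^bsub>R\<^esub> b = c \<otimes>\<^bsub>R\<^esub> a"
proof -
  interpret R: cring R by (rule cR)
  have pM: "primeideal M R" using R.maximalideal_prime mM by blast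
  interpret M: primeideal M R by (rule pM)
  let ?S = "localization R M"
  have cS: "cring ?S" and tot: "\<And>I J. ideal I ?S \<Longrightarrow> ideal J ?S \<Longrightarrow> I \<subseteq> J \<or> J \<subseteq> I"
    using vr unfolding valuation_ring_def by auto
  interpret S: cring ?S by (rule cS)
  have one: "\<one>\<^bsub>R\<^esub> \<in> carrier R - M" using M.one_imp_carrier M.I_notcarr by auto
  have refl: "((x, s), (x, s)) \<in> loc_rel R M" if "x \<in> carrier R" "s \<in> carrier R - M" for x s
    using that one unfolding loc_rel_def by (auto intro!: bexI[where x="\<one>\<^bsub>R\<^esub>"])
  have inS: "loc_class R M (x, \<one>\<^bsub>R\<^esub>) \<in> carrier ?S" if "x \<in> carrier R" for x
    using that one unfolding localization_def loc_class_def by (auto intro!: quotientI)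
  let ?X = "loc_class R M (a, \<one>\<^bsub>R\<^esub>)" and ?Y = "loc_class R M (b, \<one>\<^bsub>R\<^esub>)"
  have X: "?X \<in> carrier ?S" and Y: "?Y \<in> carrier ?S" using inS a b by auto
  from tot[OF S.cgenideal_ideal[OF X] S.cgenideal_ideal[OF Y]]
  show ?thesis
  proof
    assume "PIdl\<^bsub>?S\<^esub> ?X \<subseteq> PIdl\<^bsub>?S\<^esub> ?Y"
    with S.cgenideal_self[OF X] obtain C where "C \<in> carrier ?S" "?X = C \<otimes>\<^bsub>?S\<^esub> ?Y"
      unfolding cgenideal_def by auto
    from loc_step[OF cR pM a b this] show ?thesis by blast
  next
    assume "PIdl\<^bsub>?S\<^esub> ?Y \<subseteq> PIdl\<^bsub>?S\<^esub> ?X"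
    with S.cgenideal_self[OF Y] obtain C where "C \<in> carrier ?S" "?Y = C \<otimes>\<^bsub>?S\<^esub> ?X"
      unfolding cgenideal_def by auto
    from loc_step[OF cR pM b a this] show ?thesis by blast
  qed
qed



definition nQ :: "('a, 'b) ring_scheme \<Rightarrow> 'a set \<Rightarrow> 'a set" where
  "nQ R M = {r \<in> carrier R. \<exists>t \<in> carrier R - M. \<exists>n::nat. (t \<otimes>\<^bsub>R\<^esub> r) [^]\<^bsub>R\<^esub> n = \<zero>\<^bsub>R\<^esub>}"

lemma (in cring) prime_pow:
  assumes P: "primeideal P R" and x: "x \<in> carrier R" and "x [^] (n::nat) \<in> P"
  shows "x \<in> P"
  using assms(3)
proof (induction n)
  case 0
  then show ?case using P primeideal.I_notcarr[OF P] ideal.one_imp_carrier[OF primeideal.axioms(1)[OF P]] by auto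
next
  case (Suc n)
  then show ?case using primeideal.I_prime[OF P, of "x [^] n" x] x by auto
qed

lemma (in cring) prime_prod:
  assumes P: "primeideal P R" and "x \<in> carrier R - P" "y \<in> carrier R - P"
  shows "x \<otimes> y \<in> carrier R - P"
  using assms primeideal.I_prime[OF P] by auto

lemma (in cring) max_exists:
  assumes I: "ideal I R" and one: "\<one> \<notin> I"
  shows "\<exists>M. maximalideal M R \<and> I \<subseteq> M"
proof -
  define A where "A = {J. ideal J R \<and> I \<subseteq> J \<and> \<one> \<notin> J}"
  have "\<exists>M\<in>A. \<forall>Z\<in>A. M \<subseteq> Z \<longrightarrow> Z = M"
  proof (rule Zorn_Lemma2, intro ballI)
    fix C assume C: "C \<in> chains A"
    have CA: "C \<subseteq> A" using C unfolding chains_def by blast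
    show "\<exists>U\<in>A. \<forall>Z\<in>C. Z \<subseteq> U"
    proof (cases "C = {}")
      case True then show ?thesis using I one unfolding A_def by blast
    next
      case False
      have sc: "subset.chain {J. ideal J R} C"
        using C CA unfolding chains_alt_def subset_chain_def A_def by blast
      have "ideal (\<Union>C) R" using chain_Union_is_ideal[OF sc] False by simp
      moreover have "I \<subseteq> \<Union>C" using False CA unfolding A_def by blast
      moreover have "\<one> \<notin> \<Union>C" using CA unfolding A_def by blast
      ultimately have "\<Union>C \<in> A" unfolding A_def by blast
      thus ?thesis by blast
    qed
  qed
  then obtain M where M: "M \<in> A" and mx: "\<And>Z. Z \<in> A \<Longrightarrow> M \<subseteq> Z \<Longrightarrow> Z = M" by blast
  have MI: "ideal M R" "I \<subseteq> M" "\<one> \<notin> M" using M unfolding A_def by auto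
  have "maximalideal M R"
  proof (rule maximalidealI)
    show "ideal M R" by (rule MI(1))
    show "carrier R \<noteq> M" using MI(3) one_closed by blast
    fix J assume J: "ideal J R" "M \<subseteq> J" "J \<subseteq> carrier R"
    show "J = M \<or> J = carrier R"
    proof (cases "\<one> \<in> J")
      case True then show ?thesis using ideal.one_imp_carrier[OF J(1)] by blast
    next
      case False
      hence "J \<in> A" using J MI unfolding A_def by blast
      then show ?thesis using mx[of J] J(2) by blast
    qed
  qed
  then show ?thesis using MI by blast
qed

locale arith_loc = cring R for R (structure) +
  assumes loc: "\<And>M a b. maximalideal M R \<Longrightarrow> a \<in> carrier R \<Longrightarrow> b \<in> carrier R \<Longrightarrow>
     \<exists>t\<in>carrier R - M. \<exists>c\<in>carrier R. t \<otimes> a = c \<otimes> b \<or> t \<otimes> b = c \<otimes> a"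
begin

lemma max_prime: "maximalideal M R \<Longrightarrow> primeideal M R"
  by (rule maximalideal_prime)

lemma one_not_max: "maximalideal M R \<Longrightarrow> \<one> \<in> carrier R - M"
  using maximalideal.I_notcarr ideal.one_imp_carrier maximalideal.axioms(1) by fastforce

lemma nQ_H:
  assumes M: "maximalideal M R" and x: "x \<in> carrier R" and b: "b \<in> nQ R M"
    and w: "w \<in> carrier R - M" and k: "k \<in> carrier R" and eq: "w \<otimes> x = k \<otimes> b"
  shows "x \<in> nQ R M"
proof -
  obtain t n where t: "t \<in> carrier R - M" and tb: "(t \<otimes> b) [^] (n::nat) = \<zero>" and bc: "b \<in> carrier R"
    using b unfolding nQ_def by auto
  have "(t \<otimes> w \<otimes> x) [^] n = (k \<otimes> (t \<otimes> b)) [^] n"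
    using t w x k bc eq by (metis DiffD1 m_assoc m_lcomm)
  also have "\<dots> = k [^] n \<otimes> (t \<otimes> b) [^] n" using t k bc by (simp add: nat_pow_distrib)
  also have "\<dots> = \<zero>" using tb k by simp
  finally show ?thesis using x prime_prod[OF max_prime[OF M] t w] unfolding nQ_def by blast
qed

lemma nQ_sub: "nQ R M \<subseteq> carrier R" unfolding nQ_def by auto

lemma nQ_zero: "maximalideal M R \<Longrightarrow> \<zero> \<in> nQ R M"
  using one_not_max unfolding nQ_def by (auto intro!: bexI[where x=\<one>] exI[where x="1::nat"])

lemma nQ_mult: "maximalideal M R \<Longrightarrow> b \<in> nQ R M \<Longrightarrow> k \<in> carrier R \<Longrightarrow> k \<otimes> b \<in> nQ R M"
  using nQ_H[of M "k \<otimes> b" b \<one> k] one_not_max nQ_sub by auto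

lemma nQ_add:
  assumes M: "maximalideal M R" and a: "a \<in> nQ R M" and b: "b \<in> nQ R M"
  shows "a \<oplus> b \<in> nQ R M"
proof -
  have ac: "a \<in> carrier R" and bc: "b \<in> carrier R" using a b nQ_sub by auto
  obtain t c where t: "t \<in> carrier R - M" and c: "c \<in> carrier R" and
    cases: "t \<otimes> a = c \<otimes> b \<or> t \<otimes> b = c \<otimes> a"
    using loc[OF M ac bc] by blast
  from cases show ?thesis
  proof
    assume e: "t \<otimes> a = c \<otimes> b"
    have "t \<otimes> (a \<oplus> b) = (c \<oplus> t) \<otimes> b" using e t c ac bc by (simp add: r_distr l_distr m_comm)
    thus ?thesis using nQ_H[OF M _ b t, of "a \<oplus> b" "c \<oplus> t"] t c ac bc by auto
  next
    assume e: "t \<otimes> b = c \<otimes> a"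
    have "t \<otimes> (a \<oplus> b) = (c \<oplus> t) \<otimes> a" using e t c ac bc by (simp add: r_distr l_distr m_comm a_comm)
    thus ?thesis using nQ_H[OF M _ a t, of "a \<oplus> b" "c \<oplus> t"] t c ac bc by auto
  qed
qed

lemma nQ_ideal:
  assumes M: "maximalideal M R"
  shows "ideal (nQ R M) R"
proof (rule idealI)
  show "ring R" by (rule ring_axioms)
  show "subgroup (nQ R M) (add_monoid R)"
  proof (rule add.subgroupI)
    show "nQ R M \<subseteq> carrier R" using nQ_sub by simp
    show "nQ R M \<noteq> {}" using nQ_zero[OF M] by auto
    show "a \<oplus> b \<in> nQ R M" if a: "a \<in> nQ R M" and b: "b \<in> nQ R M" for a b
      using nQ_add[OF M a b] by simp
    fix a assume a: "a \<in> nQ R M"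
    have ac: "a \<in> carrier R" using a nQ_sub by auto
    have "\<ominus> a = (\<ominus> \<one>) \<otimes> a" using ac by (simp add: l_minus)
    thus "\<ominus> a \<in> nQ R M" using nQ_mult[OF M a, of "\<ominus> \<one>"] by simp
  qed
  fix a x assume a: "a \<in> nQ R M" and x: "x \<in> carrier R"
  show "x \<otimes> a \<in> nQ R M" using nQ_mult[OF M a x] .
  have "a \<in> carrier R" using a nQ_sub by auto
  thus "a \<otimes> x \<in> nQ R M" using nQ_mult[OF M a x] x m_comm by metis
qed

lemma nQ_sq:
  assumes M: "maximalideal M R" and a: "a \<in> carrier R" and b: "b \<in> carrier R"
    and ab: "a \<otimes> b \<in> nQ R M" and u: "u \<in> carrier R - M" and c: "c \<in> carrier R"
    and e: "u \<otimes> a = c \<otimes> b"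
  shows "a \<in> nQ R M"
proof -
  obtain t n where t: "t \<in> carrier R - M" and tn: "(t \<otimes> (a \<otimes> b)) [^] (n::nat) = \<zero>"
    using ab unfolding nQ_def by auto
  let ?y = "t \<otimes> u \<otimes> a"
  have yc: "?y \<in> carrier R" using t u a by simp
  have "?y \<otimes> ?y = (t \<otimes> u \<otimes> c) \<otimes> (t \<otimes> (a \<otimes> b))"
  proof -
    have "?y \<otimes> ?y = (t \<otimes> u \<otimes> a) \<otimes> (t \<otimes> (u \<otimes> a))" using t u a by (simp add: m_ac)
    also have "\<dots> = (t \<otimes> u \<otimes> a) \<otimes> (t \<otimes> (c \<otimes> b))" using e by simp
    also have "\<dots> = (t \<otimes> u \<otimes> c) \<otimes> (t \<otimes> (a \<otimes> b))" using t u a b c by (simp add: m_ac)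
    finally show ?thesis .
  qed
  hence "(?y \<otimes> ?y) [^] n = \<zero>" using tn t u c a b by (simp add: nat_pow_distrib)
  moreover have "(?y \<otimes> ?y) [^] n = ?y [^] (2 * n)"
    using yc by (metis nat_pow_pow nat_pow_Suc nat_pow_0 l_one numeral_2_eq_2 mult.commute)
  ultimately have "((t \<otimes> u) \<otimes> a) [^] (2 * n) = \<zero>" by simp
  thus ?thesis using a prime_prod[OF max_prime[OF M] t u] unfolding nQ_def by blast
qed

lemma nQ_prime:
  assumes M: "maximalideal M R"
  shows "primeideal (nQ R M) R"
proof (rule primeidealI)
  show "ideal (nQ R M) R" by (rule nQ_ideal[OF M])
  show "cring R" by (rule is_cring)
  show "carrier R \<noteq> nQ R M"
  proof
    assume "carrier R = nQ R M"
    hence "\<one> \<in> nQ R M" by auto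
    then obtain t n where t: "t \<in> carrier R - M" and "(t \<otimes> \<one>) [^] (n::nat) = \<zero>"
      unfolding nQ_def by auto
    hence "t [^] n \<in> M" using t maximalideal.axioms(1)[OF M] ideal.Icarr additive_subgroup.zero_closed
      by (metis DiffD1 ideal.axioms(1) r_one)
    thus False using prime_pow[OF max_prime[OF M]] t by auto
  qed
  fix a b assume a: "a \<in> carrier R" and b: "b \<in> carrier R" and ab: "a \<otimes> b \<in> nQ R M"
  obtain u c where u: "u \<in> carrier R - M" and c: "c \<in> carrier R" and
    cases: "u \<otimes> a = c \<otimes> b \<or> u \<otimes> b = c \<otimes> a"
    using loc[OF M a b] by blast
  from cases show "a \<in> nQ R M \<or> b \<in> nQ R M"
  proof
    assume "u \<otimes> a = c \<otimes> b" thus ?thesis using nQ_sq[OF M a b ab u c] by blast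
  next
    assume "u \<otimes> b = c \<otimes> a"
    moreover have "b \<otimes> a \<in> nQ R M" using ab a b m_comm by simp
    ultimately show ?thesis using nQ_sq[OF M b a _ u c] by blast
  qed
qed

lemma nQ_below:
  assumes M: "maximalideal M R" and P: "primeideal P R" and PM: "P \<subseteq> M"
  shows "nQ R M \<subseteq> P"
proof
  fix r assume "r \<in> nQ R M"
  then obtain t n where r: "r \<in> carrier R" and t: "t \<in> carrier R - M" and tn: "(t \<otimes> r) [^] (n::nat) = \<zero>"
    unfolding nQ_def by auto
  have "\<zero> \<in> P" using P by (simp add: additive_subgroup.zero_closed ideal.axioms(1) primeideal.axioms(1))
  hence "t \<otimes> r \<in> P" using prime_pow[OF P, of "t \<otimes> r" n] tn t r by auto
  thus "r \<in> P" using primeideal.I_prime[OF P, of t r] t r PM by auto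
qed

lemma nQ_minimal:
  assumes M: "maximalideal M R"
  shows "minimal_prime R (nQ R M)"
  unfolding minimal_prime_def
proof (intro conjI allI impI)
  show "primeideal (nQ R M) R" by (rule nQ_prime[OF M])
  have sub: "nQ R M \<subseteq> M" using nQ_below[OF M max_prime[OF M]] by simp
  fix Q assume "primeideal Q R \<and> Q \<subseteq> nQ R M"
  thus "Q = nQ R M" using nQ_below[OF M, of Q] sub by auto
qed

lemma minimal_eq:
  assumes M: "maximalideal M R" and P: "minimal_prime R P" and PM: "P \<subseteq> M"
  shows "P = nQ R M"
  using P nQ_below[OF M _ PM] nQ_prime[OF M] unfolding minimal_prime_def by auto

end



theorem proposition3p7:
  fixes R :: "('a, 'b) ring_scheme"
  assumes "cring R"
    and "\<one>\<^bsub>R\<^esub> \<noteq> \<zero>\<^bsub>R\<^esub>"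
    and "arithmetic_ring R"
  shows "(\<exists>!P. minimal_prime R P) \<longleftrightarrow>
         (\<forall>d \<in> carrier R - jacobson_radical R. annihilator R d \<subseteq> jacobson_radical R)"
proof -
  interpret R: cring R by (rule assms(1))
  interpret A: arith_loc R
  proof
    fix M a b assume "maximalideal M R" "a \<in> carrier R" "b \<in> carrier R"
    thus "\<exists>t\<in>carrier R - M. \<exists>c\<in>carrier R. t \<otimes>\<^bsub>R\<^esub> a = c \<otimes>\<^bsub>R\<^esub> b \<or> t \<otimes>\<^bsub>R\<^esub> b = c \<otimes>\<^bsub>R\<^esub> a"
      using loc_prop[OF assms(1)] assms(3) unfolding arithmetic_ring_def by blast
  qed
  have "\<one>\<^bsub>R\<^esub> \<notin> {\<zero>\<^bsub>R\<^esub>}" using assms(2) by simp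
  then obtain M0 where M0: "maximalideal M0 R" using R.max_exists[OF R.zeroideal] by blast
  have notJ: "\<exists>M. maximalideal M R \<and> d \<notin> M" if "d \<in> carrier R - jacobson_radical R" for d
    using that unfolding jacobson_radical_def by auto
  show ?thesis
  proof
    assume U: "\<exists>!P. minimal_prime R P"
    have hq: "nQ R M = nQ R M0" if "maximalideal M R" for M
      using U A.nQ_minimal[OF that] A.nQ_minimal[OF M0] by blast
    show "\<forall>d \<in> carrier R - jacobson_radical R. annihilator R d \<subseteq> jacobson_radical R"
    proof (intro ballI subsetI)
      fix d x assume d: "d \<in> carrier R - jacobson_radical R" and x: "x \<in> annihilator R d"
      obtain M' where M': "maximalideal M' R" "d \<notin> M'" using notJ[OF d] by blast
      have xc: "x \<in> carrier R" and xd: "x \<otimes>\<^bsub>R\<^esub> d = \<zero>\<^bsub>R\<^esub>" using x unfolding annihilator_def by auto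
      have "x \<in> M" if M: "maximalideal M R" for M
      proof (rule ccontr)
        assume "x \<notin> M"
        hence "(x \<otimes>\<^bsub>R\<^esub> d) [^]\<^bsub>R\<^esub> (1::nat) = \<zero>\<^bsub>R\<^esub>" "x \<in> carrier R - M" using xd xc d by auto
        hence "d \<in> nQ R M" using d unfolding nQ_def by blast
        hence "d \<in> nQ R M'" using hq[OF M] hq[OF M'(1)] by simp
        thus False using A.nQ_below[OF M'(1) A.max_prime[OF M'(1)]] M'(2) by auto
      qed
      thus "x \<in> jacobson_radical R" using xc unfolding jacobson_radical_def by auto
    qed
  next
    assume H: "\<forall>d \<in> carrier R - jacobson_radical R. annihilator R d \<subseteq> jacobson_radical R"
    have sub: "nQ R M \<subseteq> M'" if M: "maximalideal M R" and M': "maximalideal M' R" for M M'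
    proof
      fix r assume "r \<in> nQ R M"
      then obtain t n where r: "r \<in> carrier R" and t: "t \<in> carrier R - M"
        and tn: "(t \<otimes>\<^bsub>R\<^esub> r) [^]\<^bsub>R\<^esub> (n::nat) = \<zero>\<^bsub>R\<^esub>"
        unfolding nQ_def by auto
      show "r \<in> M'"
      proof (rule ccontr)
        assume rM: "r \<notin> M'"
        have "r [^]\<^bsub>R\<^esub> n \<notin> M'" using R.prime_pow[OF A.max_prime[OF M'] r] rM by blast
        hence rJ: "r [^]\<^bsub>R\<^esub> n \<in> carrier R - jacobson_radical R"
          using r M' unfolding jacobson_radical_def by auto
        have "t [^]\<^bsub>R\<^esub> n \<otimes>\<^bsub>R\<^esub> r [^]\<^bsub>R\<^esub> n = \<zero>\<^bsub>R\<^esub>"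
          using tn t r by (simp add: R.nat_pow_distrib)
        hence "t [^]\<^bsub>R\<^esub> n \<in> annihilator R (r [^]\<^bsub>R\<^esub> n)" using t unfolding annihilator_def by auto
        hence "t [^]\<^bsub>R\<^esub> n \<in> M" using H rJ M unfolding jacobson_radical_def by blast
        thus False using R.prime_pow[OF A.max_prime[OF M]] t by blast
      qed
    qed
    have eq: "nQ R M = nQ R M0" if M: "maximalideal M R" for M
      using A.nQ_below[OF M0 A.nQ_prime[OF M] sub[OF M M0]]
        A.nQ_below[OF M A.nQ_prime[OF M0] sub[OF M0 M]] by blast
    show "\<exists>!P. minimal_prime R P"
    proof (rule ex1I)
      show "minimal_prime R (nQ R M0)" by (rule A.nQ_minimal[OF M0])
      fix P assume P: "minimal_prime R P"
      hence Pp: "primeideal P R" unfolding minimal_prime_def by blast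
      have "\<one>\<^bsub>R\<^esub> \<notin> P"
        using primeideal.I_notcarr[OF Pp] ideal.one_imp_carrier[OF primeideal.axioms(1)[OF Pp]] by blast
      then obtain M where M: "maximalideal M R" "P \<subseteq> M"
        using R.max_exists[OF primeideal.axioms(1)[OF Pp]] by blast
      show "P = nQ R M0" using A.minimal_eq[OF M(1) P M(2)] eq[OF M(1)] by simp
    qed
  qed
qed

end
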